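(* Let $A$ be a Hausdorff abelian topological group such that both $\alpha_A$ and $\alpha_{\hat A}$ are continuous. Then the following are equivalent: (i) $\alpha_A^{-1}(F)$ is compact in $A$ for every compact subset $F\subseteq\hat{\hat A}$; (ii) $A$ has the quasi-convex compactness property.
   Context: $\mathbb{T}=\mathbb{R}/\mathbb{Z}$, $\Lambda_1$ is the image of $[-\tfrac14,\tfrac14]$ in $\mathbb{T}$. For an abelian topological group $B$, $\hat B$ is the group of continuous homomorphisms $B\to\mathbb{T}$ with the compact-open topology and $\alpha_B\colon B\to\hat{\hat B}$, $\alpha_B(b)(\chi)=\chi(b)$. For $S\subseteq A$, $S^\vartriangleright=\{\chi\in\hat A\mid\chi(S)\subseteq\Lambda_1\}$; for $\Phi\subseteq\hat A$, $\Phi^\vartriangleleft=\{a\in A\mid\chi(a)\in\Lambda_1\ \forall\chi\in\Phi\}$. $A$ has the quasi-convex compactness property if $K^{\vartriangleright\vartriangleleft}$ is compact for every compact $K\subseteq A$. *)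

theory Defs
  imports "HOL-Analysis.Analysis"
begin

text \<open>The circle group T = R/Z is realised as the unit circle in the complex plane,
  via the isomorphism t + Z |-> cis (2 pi t); its topology is the subspace topology.\<close>

definition circle_top :: "complex topology" where
  "circle_top = subtopology euclidean (sphere 0 1)"

definition Lambda1 :: "complex set" where
  "Lambda1 = (\<lambda>t. cis (2 * pi * t)) ` {-1/4 .. 1/4}"

definition compact_open_top :: "'a topology \<Rightarrow> 'b topology \<Rightarrow> ('a \<Rightarrow> 'b) topology" where
  "compact_open_top X Y =
     topology_generated_by {{f. f ` K \<subseteq> U} | K U. compactin X K \<and> openin Y U}"

text \<open>An abelian topological group is given by a topology X (carrier = topspace X) and
  a group operation m. Its dual: continuous homomorphisms into T, represented as
  extensional functions (value undefined outside the carrier).\<close>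
definition chars :: "'a topology \<Rightarrow> ('a \<Rightarrow> 'a \<Rightarrow> 'a) \<Rightarrow> ('a \<Rightarrow> complex) set" where
  "chars X m = {\<gamma> \<in> extensional (topspace X). continuous_map X circle_top \<gamma> \<and>
      (\<forall>x\<in>topspace X. \<forall>y\<in>topspace X. \<gamma> (m x y) = \<gamma> x * \<gamma> y)}"

definition char_top :: "'a topology \<Rightarrow> ('a \<Rightarrow> 'a \<Rightarrow> 'a) \<Rightarrow> ('a \<Rightarrow> complex) topology" where
  "char_top X m = subtopology (compact_open_top X circle_top) (chars X m)"

definition char_mult :: "'a topology \<Rightarrow> ('a \<Rightarrow> complex) \<Rightarrow> ('a \<Rightarrow> complex) \<Rightarrow> ('a \<Rightarrow> complex)" where
  "char_mult X \<gamma> \<psi> = restrict (\<lambda>x. \<gamma> x * \<psi> x) (topspace X)"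

definition eval_map :: "'a topology \<Rightarrow> ('a \<Rightarrow> 'a \<Rightarrow> 'a) \<Rightarrow> 'a \<Rightarrow> (('a \<Rightarrow> complex) \<Rightarrow> complex)" where
  "eval_map X m b = restrict (\<lambda>\<gamma>. \<gamma> b) (chars X m)"

definition polar_right :: "'a topology \<Rightarrow> ('a \<Rightarrow> 'a \<Rightarrow> 'a) \<Rightarrow> 'a set \<Rightarrow> ('a \<Rightarrow> complex) set" where
  "polar_right X m S = {\<gamma> \<in> chars X m. \<gamma> ` S \<subseteq> Lambda1}"

definition polar_left :: "'a topology \<Rightarrow> ('a \<Rightarrow> 'a \<Rightarrow> 'a) \<Rightarrow> ('a \<Rightarrow> complex) set \<Rightarrow> 'a set" where
  "polar_left X m \<Phi> = {a \<in> topspace X. \<forall>\<gamma>\<in>\<Phi>. \<gamma> a \<in> Lambda1}"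

definition qc_compactness_property :: "'a topology \<Rightarrow> ('a \<Rightarrow> 'a \<Rightarrow> 'a) \<Rightarrow> bool" where
  "qc_compactness_property X m \<longleftrightarrow>
     (\<forall>K. compactin X K \<longrightarrow> compactin X (polar_left X m (polar_right X m K)))"

end

theory Submission
  imports Defs
begin

lemma Lambda1_eq: "Lambda1 = {z. cmod z = 1 \<and> 0 \<le> Re z}"
proof (intro set_eqI iffI)
  fix z assume "z \<in> Lambda1"
  then obtain t where t: "t \<in> {-1/4..1/4}" "z = cis (2*pi*t)" unfolding Lambda1_def by auto
  have l: "2*pi*(-1/4) \<le> 2*pi*t" using t(1) by (intro mult_left_mono) auto
  have u: "2*pi*t \<le> 2*pi*(1/4)" using t(1) by (intro mult_left_mono) auto
  have "0 \<le> cos (2*pi*t)" using l u by (intro cos_ge_zero) auto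
  then show "z \<in> {z. cmod z = 1 \<and> 0 \<le> Re z}" using t by auto
next
  fix z assume z: "z \<in> {z. cmod z = 1 \<and> 0 \<le> Re z}"
  have n: "(Re z)^2 + (Im z)^2 = 1" using z by (simp add: cmod_def)
  have b: "-1 \<le> Im z" "Im z \<le> 1" using abs_Im_le_cmod[of z] z by auto
  define th where "th = arcsin (Im z)"
  have th: "-(pi/2) \<le> th" "th \<le> pi/2" using arcsin_bounded[OF b] th_def by auto
  have "cos th = sqrt (1 - (Im z)^2)" using cos_arcsin[OF b] th_def by simp
  also have "\<dots> = Re z" using n z by (simp add: real_sqrt_unique)
  finally have c: "cos th = Re z" .
  have s: "sin th = Im z" using sin_arcsin[OF b] th_def by simp
  have "z = cis (2*pi*(th/(2*pi)))" using c s by (simp add: complex_eq_iff)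
  moreover have "th/(2*pi) \<in> {-1/4..1/4}" using th by (auto simp: field_simps)
  ultimately show "z \<in> Lambda1" unfolding Lambda1_def by blast
qed

lemma cos_mult_neg:
  fixes th :: real and m :: nat
  assumes "0 \<le> th" "th \<le> pi" "m \<ge> 1" "pi/(2*m) < th"
  shows "\<exists>k\<in>{1..m}. cos (real k * th) < 0"
proof -
  have thp: "th > 0" using assms(4) by (smt (verit) divide_nonneg_nonneg pi_ge_zero of_nat_0_le_iff)
  define q where "q = pi/(2*th)"
  have qp: "q > 0" using thp by (simp add: q_def)
  have qm: "q < m" using assms(3,4) thp by (simp add: q_def field_simps)
  define k where "k = nat (floor q) + 1"
  have fl: "real (nat (floor q)) = of_int (floor q)" using qp by simp
  have k1: "real k - 1 \<le> q" using fl k_def by simp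
  have k2: "q < real k" using fl k_def by linarith
  have "k \<le> m"
  proof -
    have "of_int (floor q) < real m" using k1 qm fl by linarith
    then have "floor q < int m" by linarith
    then have "nat (floor q) < m" using qp by (subst nat_less_iff) auto
    then show ?thesis using k_def by linarith
  qed
  moreover have "k \<ge> 1" by (simp add: k_def)
  moreover have "cos (real k * th) < 0"
  proof -
    have a: "(real k - 1) * th \<le> pi/2" using k1 thp by (simp add: q_def field_simps)
    have b: "pi/2 < real k * th" using k2 thp by (simp add: q_def field_simps)
    have c: "real k * th < 3*pi/2"
    proof (rule ccontr)
      assume "\<not> real k * th < 3*pi/2"
      then have "real k * th \<ge> 3*pi/2" by simp
      with a assms(2) have "th = pi" "(real k - 1) * th = pi/2" by (auto simp: algebra_simps)
      then have "(real k - 1) * 2 = 1" by simp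
      then have "real (2*k) = 3" by simp
      then have "2*k = 3" by linarith
      then show False by presburger
    qed
    have "0 < cos (real k * th - pi)" using b c by (intro cos_gt_zero_pi) auto
    then show ?thesis by (simp add: cos_diff)
  qed
  ultimately show ?thesis by auto
qed

lemma circle_arc:
  fixes z :: complex and m :: nat
  assumes "cmod z = 1" "m \<ge> 1" "\<forall>k\<in>{1..m}. 0 \<le> Re (z^k)"
  shows "cmod (z - 1) \<le> pi/(2*m)"
proof -
  define th where "th = Arg z"
  have "z \<noteq> 0" using assms(1) by auto
  then have z: "z = cis th" using cis_Arg[of z] assms(1) th_def by (auto simp: sgn_div_norm)
  have thb: "-pi < th" "th \<le> pi" using Arg_bounded th_def by auto
  have "\<bar>th\<bar> \<le> pi/(2*m)"
  proof (rule ccontr)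
    assume "\<not> ?thesis"
    then have "pi/(2*m) < \<bar>th\<bar>" by simp
    then obtain k where k: "k\<in>{1..m}" "cos (real k * \<bar>th\<bar>) < 0"
      using cos_mult_neg[of "\<bar>th\<bar>" m] thb assms(2) by (auto simp: abs_le_iff)
    have "cos (real k * \<bar>th\<bar>) = cos (real k * th)"
      by (cases "th \<ge> 0") (auto simp: )
    then have "Re (z^k) < 0" using k by (simp add: z cos_n_Re_cis_pow_n)
    then show False using assms(3) k by force
  qed
  moreover have "cmod (z - 1) \<le> \<bar>th\<bar>"
  proof -
    have "cmod (z - 1) = 2 * \<bar>sin (th/2)\<bar>" using dist_exp_i_1[of th] by (simp add: z cis_conv_exp mult.commute)
    also have "\<dots> \<le> 2 * \<bar>th/2\<bar>" using abs_sin_x_le_abs_x[of "th/2"] by linarith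
    finally show ?thesis by simp
  qed
  ultimately show ?thesis by linarith
qed

abbreviation Ch :: "('a::topological_ab_group_add \<Rightarrow> complex) set" where
  "Ch \<equiv> chars euclidean (+)"
abbreviation T1 :: "('a::topological_ab_group_add \<Rightarrow> complex) topology" where
  "T1 \<equiv> char_top euclidean (+)"

lemma topspace_co[simp]: "topspace (compact_open_top X Y) = UNIV"
proof -
  have "{f. f ` {} \<subseteq> {}} \<in> {{f. f ` K \<subseteq> U} | K U. compactin X K \<and> openin Y U}" by force
  then show ?thesis unfolding compact_open_top_def topology_generated_by_topspace by auto
qed

lemma co_open: "compactin X K \<Longrightarrow> openin Y U \<Longrightarrow> openin (compact_open_top X Y) {f. f ` K \<subseteq> U}"
  unfolding compact_open_top_def by (rule topology_generated_by_Basis) blast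

lemma topspace_char_top[simp]: "topspace (char_top X m) = chars X m"
  by (simp add: char_top_def)

lemma topspace_circle[simp]: "topspace circle_top = sphere 0 1"
  by (simp add: circle_top_def)

lemma cont_circle_iff: "continuous_map T circle_top f \<longleftrightarrow>
   continuous_map T euclidean f \<and> (\<forall>x\<in>topspace T. cmod (f x) = 1)"
  unfolding circle_top_def continuous_map_in_subtopology Pi_iff mem_sphere_0 by simp

lemma chars_norm: "\<gamma> \<in> chars T m \<Longrightarrow> x \<in> topspace T \<Longrightarrow> cmod (\<gamma> x) = 1"
  unfolding chars_def cont_circle_iff by auto

lemma Ch_iff: "(\<gamma> \<in> (Ch :: ('a::topological_ab_group_add \<Rightarrow> complex) set)) \<longleftrightarrow>
   continuous_on UNIV \<gamma> \<and> (\<forall>x. cmod (\<gamma> x) = 1) \<and> (\<forall>x y. \<gamma> (x + y) = \<gamma> x * \<gamma> y)"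
  unfolding chars_def cont_circle_iff
  using continuous_map_iff_continuous[of UNIV \<gamma>] by auto

lemma char_mult_eu[simp]: "char_mult euclidean \<phi> \<psi> = (\<lambda>x. \<phi> x * \<psi> x)"
  by (simp add: char_mult_def restrict_UNIV)

lemma ChD: assumes "\<gamma> \<in> Ch" shows "continuous_on UNIV \<gamma>" "cmod (\<gamma> x) = 1" "\<gamma> (x + y) = \<gamma> x * \<gamma> y"
  using Ch_iff[THEN iffD1, OF assms] by auto

lemma ChI: assumes "continuous_on UNIV \<gamma>" "\<And>x. cmod (\<gamma> x) = 1" "\<And>x y. \<gamma> (x + y) = \<gamma> x * \<gamma> y"
  shows "\<gamma> \<in> Ch"
  using assms Ch_iff[THEN iffD2] by blast

lemma Ch_zero: "\<gamma> \<in> Ch \<Longrightarrow> \<gamma> 0 = 1"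
proof -
  assume g: "\<gamma> \<in> Ch"
  have "\<gamma> 0 = \<gamma> 0 * \<gamma> 0" using ChD(3)[OF g, of 0 0] by simp
  moreover have "\<gamma> 0 \<noteq> 0" using ChD(2)[OF g, of 0] by auto
  ultimately show ?thesis by simp
qed

lemma Ch_mult: assumes "\<phi> \<in> Ch" "\<psi> \<in> Ch" shows "(\<lambda>x. \<phi> x * \<psi> x) \<in> Ch"
proof (rule ChI)
  show "continuous_on UNIV (\<lambda>x. \<phi> x * \<psi> x)" by (rule continuous_on_mult[OF ChD(1)[OF assms(1)] ChD(1)[OF assms(2)]])
  show "cmod (\<phi> x * \<psi> x) = 1" for x by (simp add: norm_mult ChD(2)[OF assms(1)] ChD(2)[OF assms(2)])
  show "\<phi> (x + y) * \<psi> (x + y) = \<phi> x * \<psi> x * (\<phi> y * \<psi> y)" for x y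
    by (simp add: ChD(3)[OF assms(1)] ChD(3)[OF assms(2)])
qed

lemma Ch_cnj: assumes "\<phi> \<in> Ch" shows "(\<lambda>x. cnj (\<phi> x)) \<in> Ch"
proof (rule ChI)
  show "continuous_on UNIV (\<lambda>x. cnj (\<phi> x))" by (rule continuous_on_cnj[OF ChD(1)[OF assms(1)]])
  show "cmod (cnj (\<phi> x)) = 1" for x by (simp add: ChD(2)[OF assms(1)])
  show "cnj (\<phi> (x + y)) = cnj (\<phi> x) * cnj (\<phi> y)" for x y
    by (simp add: ChD(3)[OF assms(1)])
qed

lemma Ch_pow: assumes "\<phi> \<in> Ch" shows "(\<lambda>x. \<phi> x ^ k) \<in> Ch"
proof (rule ChI)
  show "continuous_on UNIV (\<lambda>x. \<phi> x ^ k)" by (rule continuous_on_power[OF ChD(1)[OF assms(1)]])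
  show "cmod (\<phi> x ^ k) = 1" for x by (simp add: norm_power ChD(2)[OF assms(1)])
  show "\<phi> (x + y) ^ k = \<phi> x ^ k * \<phi> y ^ k" for x y
    by (simp add: ChD(3)[OF assms(1)] power_mult_distrib)
qed

lemma Ch_one: "(\<lambda>x. 1) \<in> Ch"
  by (rule ChI) auto

primrec nmul :: "nat \<Rightarrow> 'a::ab_group_add \<Rightarrow> 'a" where
  "nmul 0 x = 0" | "nmul (Suc k) x = x + nmul k x"

lemma nmul_cont: "continuous_on UNIV (nmul k :: 'a::topological_ab_group_add \<Rightarrow> 'a)"
  by (induct k) (simp_all add: continuous_on_add continuous_on_const continuous_on_id)

lemma Ch_nmul: "\<phi> \<in> Ch \<Longrightarrow> \<phi> (nmul k x) = \<phi> x ^ k"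
  by (induct k) (simp_all add: Ch_zero ChD(3))

definition Lmult :: "'a::ab_group_add set \<Rightarrow> nat \<Rightarrow> 'a set" where
  "Lmult K m = (\<Union>k\<in>{1..m}. nmul k ` K)"

lemma Lmult_compact: "compact (K::'a::topological_ab_group_add set) \<Longrightarrow> compact (Lmult K m)"
proof -
  assume K: "compact K"
  have "compact (nmul k ` K)" for k
    by (rule compact_continuous_image[OF continuous_on_subset[OF nmul_cont] K]) simp
  then show ?thesis unfolding Lmult_def by (intro compact_UN) simp_all
qed

lemma polar_right_eu: "polar_right euclidean (+) K = {\<phi>\<in>Ch. \<phi> ` K \<subseteq> Lambda1}"
  by (simp add: polar_right_def)

definition Om :: "'a::topological_ab_group_add set \<Rightarrow> (('a \<Rightarrow> complex) \<Rightarrow> complex) \<Rightarrow> bool" where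
  "Om K \<omega> \<longleftrightarrow> (\<forall>\<phi>\<in>Ch. cmod (\<omega> \<phi>) = 1) \<and>
      (\<forall>\<phi>\<in>Ch. \<forall>\<psi>\<in>Ch. \<omega> (\<lambda>x. \<phi> x * \<psi> x) = \<omega> \<phi> * \<omega> \<psi>) \<and>
      (\<forall>\<phi>\<in>polar_right euclidean (+) K. \<omega> \<phi> \<in> Lambda1)"

lemma Om_pow:
  assumes "Om K \<omega>" "\<psi> \<in> Ch"
  shows "\<omega> (\<lambda>x. \<psi> x ^ k) = \<omega> \<psi> ^ k"
proof (induct k)
  case 0
  have "\<omega> (\<lambda>x. 1) = \<omega> (\<lambda>x. 1) * \<omega> (\<lambda>x. 1)" "cmod (\<omega> (\<lambda>x. 1)) = 1"
  proof -
    have h: "\<forall>\<phi>\<in>Ch. \<forall>\<psi>\<in>Ch. \<omega> (\<lambda>x. \<phi> x * \<psi> x) = \<omega> \<phi> * \<omega> \<psi>" "\<forall>\<phi>\<in>Ch. cmod (\<omega> \<phi>) = 1"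
      using assms(1) unfolding Om_def by blast+
    show "\<omega> (\<lambda>x. 1) = \<omega> (\<lambda>x. 1) * \<omega> (\<lambda>x. 1)" using h(1) Ch_one by fastforce
    show "cmod (\<omega> (\<lambda>x. 1)) = 1" using h(2) Ch_one by blast
  qed
  then have "\<omega> (\<lambda>x. 1) \<noteq> 0" by auto
  then show ?case using \<open>\<omega> (\<lambda>x. 1) = \<omega> (\<lambda>x. 1) * \<omega> (\<lambda>x. 1)\<close> by simp
next
  case (Suc k)
  have "\<omega> (\<lambda>x. \<psi> x ^ Suc k) = \<omega> (\<lambda>x. \<psi> x * \<psi> x ^ k)" by simp
  also have "\<dots> = \<omega> \<psi> * \<omega> (\<lambda>x. \<psi> x ^ k)"
  proof -
    have h: "\<forall>\<phi>\<in>Ch. \<forall>\<psi>\<in>Ch. \<omega> (\<lambda>x. \<phi> x * \<psi> x) = \<omega> \<phi> * \<omega> \<psi>"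
      using assms(1) unfolding Om_def by blast
    show ?thesis using h[rule_format, OF assms(2) Ch_pow[OF assms(2)]] by simp
  qed
  finally show ?case using Suc by simp
qed

lemma Om_small:
  assumes "Om K \<omega>" "\<psi> \<in> Ch" "\<psi> ` Lmult K m \<subseteq> Lambda1" "m \<ge> 1"
  shows "cmod (\<omega> \<psi> - 1) \<le> pi / (2*m)"
proof (rule circle_arc)
  show "cmod (\<omega> \<psi>) = 1" using assms unfolding Om_def by blast
  show "\<forall>k\<in>{1..m}. 0 \<le> Re (\<omega> \<psi> ^ k)"
  proof
    fix k assume k: "k \<in> {1..m}"
    have "(\<lambda>x. \<psi> x ^ k) \<in> polar_right euclidean (+) K"
      unfolding polar_right_eu
    proof (intro CollectI conjI)
      show "(\<lambda>x. \<psi> x ^ k) \<in> Ch" using Ch_pow assms(2) by blast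
      show "(\<lambda>x. \<psi> x ^ k) ` K \<subseteq> Lambda1"
      proof
        fix z assume "z \<in> (\<lambda>x. \<psi> x ^ k) ` K"
        then obtain x where x: "x \<in> K" "z = \<psi> x ^ k" by auto
        have "nmul k x \<in> Lmult K m" using x k unfolding Lmult_def by auto
        then show "z \<in> Lambda1" using x assms(2,3) Ch_nmul by fastforce
      qed
    qed
    then have "\<omega> (\<lambda>x. \<psi> x ^ k) \<in> Lambda1" using assms(1) unfolding Om_def by blast
    then show "0 \<le> Re (\<omega> \<psi> ^ k)" using Om_pow[OF assms(1,2)] by (simp add: Lambda1_eq)
  qed
qed (use assms in auto)

lemma openin_INT_fin: "finite I \<Longrightarrow> (\<And>i. i \<in> I \<Longrightarrow> openin T (A i)) \<Longrightarrow> openin T (topspace T \<inter> (\<Inter>i\<in>I. A i))"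
proof (induct I rule: finite_induct)
  case empty show ?case by simp
next
  case (insert i I)
  have "topspace T \<inter> (\<Inter>j\<in>insert i I. A j) = A i \<inter> (topspace T \<inter> (\<Inter>j\<in>I. A j))"
    using openin_subset[of T "A i"] insert.prems by auto
  then show ?case using insert by (simp add: openin_Int)
qed

lemma closedin_INT_all: "(\<And>i. i \<in> I \<Longrightarrow> closedin T (A i)) \<Longrightarrow> closedin T (topspace T \<inter> (\<Inter>i\<in>I. A i))"
proof (cases "I = {}")
  case True then show ?thesis by simp
next
  case False
  assume h: "\<And>i. i \<in> I \<Longrightarrow> closedin T (A i)"
  have "topspace T \<inter> (\<Inter>i\<in>I. A i) = (\<Inter>i\<in>I. A i)" using False h closedin_subset by fastforce
  moreover have "closedin T (\<Inter>i\<in>I. A i)" using False h by (intro closedin_Inter) auto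
  ultimately show ?thesis by simp
qed

lemma UCC:
  fixes L :: "'a::topological_ab_group_add set"
  assumes "compact L" "\<phi>0 \<in> Ch" "\<delta> > 0"
  shows "\<exists>Nb. openin T1 Nb \<and> \<phi>0 \<in> Nb \<and> (\<forall>\<phi>\<in>Nb. \<forall>y\<in>L. cmod (\<phi> y - \<phi>0 y) < \<delta>)"
proof -
  have c0: "continuous_on UNIV \<phi>0" using ChD(1)[OF assms(2)] .
  have n0: "cmod (\<phi>0 y) = 1" for y using ChD(2)[OF assms(2)] .
  have "compact (\<phi>0 ` L)" using compact_continuous_image[OF continuous_on_subset[OF c0] assms(1)] by simp
  moreover have "\<phi>0 ` L \<subseteq> \<Union>((\<lambda>c. ball c (\<delta>/3)) ` (\<phi>0 ` L))" using assms(3) by force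
  ultimately obtain Cs where Cs: "Cs \<subseteq> \<phi>0 ` L" "finite Cs" "\<phi>0 ` L \<subseteq> \<Union>((\<lambda>c. ball c (\<delta>/3)) ` Cs)"
    using compactE_image[of "\<phi>0 ` L" "\<phi>0 ` L" "\<lambda>c. ball c (\<delta>/3)"] by (metis open_ball)
  define Lc where "Lc c = L \<inter> \<phi>0 -` cball c (\<delta>/3)" for c
  define Uc where "Uc c = sphere 0 1 \<inter> ball c (2*\<delta>/3)" for c :: complex
  define G where "G = (\<Inter>c\<in>Cs. {f. f ` Lc c \<subseteq> Uc c})"
  have Lc: "compactin euclidean (Lc c)" for c unfolding compactin_euclidean_iff Lc_def
    by (intro compact_Int_closed assms closed_vimage c0) simp
  have Uc: "openin circle_top (Uc c)" for c unfolding circle_top_def Uc_def by (intro openin_open_Int) simp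
  have "openin (compact_open_top euclidean circle_top) (topspace (compact_open_top euclidean circle_top) \<inter> G)"
    unfolding G_def by (rule openin_INT_fin[OF Cs(2)]) (rule co_open[OF Lc Uc])
  then have Go: "openin (compact_open_top euclidean circle_top) G" by simp
  define Nb where "Nb = G \<inter> Ch"
  have "openin T1 Nb" unfolding char_top_def openin_subtopology Nb_def using Go by blast
  moreover have "\<phi>0 \<in> Nb"
  proof -
    have "\<phi>0 ` Lc c \<subseteq> Uc c" if "c \<in> Cs" for c
    proof
      fix z assume "z \<in> \<phi>0 ` Lc c"
      then obtain y where y: "y \<in> Lc c" "z = \<phi>0 y" by auto
      have "dist c z \<le> \<delta>/3" using y unfolding Lc_def by auto
      then show "z \<in> Uc c" using y n0 assms(3) unfolding Uc_def by auto
    qed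
    then show ?thesis unfolding Nb_def G_def using assms(2) by auto
  qed
  moreover have "\<forall>\<phi>\<in>Nb. \<forall>y\<in>L. cmod (\<phi> y - \<phi>0 y) < \<delta>"
  proof (intro ballI)
    fix \<phi> y assume \<phi>: "\<phi> \<in> Nb" and y: "y \<in> L"
    obtain c where c: "c \<in> Cs" "\<phi>0 y \<in> ball c (\<delta>/3)" using Cs(3) y by auto
    have "y \<in> Lc c" using c y unfolding Lc_def by auto
    then have "\<phi> y \<in> Uc c" using \<phi> c unfolding Nb_def G_def by auto
    then have "dist c (\<phi> y) < 2*\<delta>/3" unfolding Uc_def by auto
    moreover have "dist c (\<phi>0 y) < \<delta>/3" using c by auto
    moreover have "dist (\<phi> y) (\<phi>0 y) \<le> dist (\<phi> y) c + dist c (\<phi>0 y)" by (rule dist_triangle)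
    ultimately have "dist (\<phi> y) (\<phi>0 y) < \<delta>" by (simp add: dist_commute)
    then show "cmod (\<phi> y - \<phi>0 y) < \<delta>" by (simp add: dist_norm)
  qed
  ultimately show ?thesis by blast
qed

lemma T1_sub: "openin T1 Nb \<Longrightarrow> Nb \<subseteq> Ch"
  using openin_subset by fastforce

lemma EQ:
  assumes "compact K" "\<phi>0 \<in> Ch" "\<eta> > 0"
  shows "\<exists>Nb. openin T1 Nb \<and> \<phi>0 \<in> Nb \<and> (\<forall>\<omega>. Om K \<omega> \<longrightarrow> (\<forall>\<phi>\<in>Nb. cmod (\<omega> \<phi> - \<omega> \<phi>0) < \<eta>))"
proof -
  obtain m :: nat where m: "pi/\<eta> < m" using reals_Archimedean2 by blast
  have "pi/\<eta> > 0" using assms(3) by simp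
  then have m1: "m \<ge> 1" using m by (cases m) auto
  have "pi < m * \<eta>" using m assms(3) by (simp add: field_simps)
  moreover have "m * \<eta> \<le> 2 * m * \<eta>" using assms(3) by simp
  ultimately have "pi < 2 * m * \<eta>" by linarith
  then have pm: "pi/(2*m) < \<eta>" using m1 assms(3) by (simp add: field_simps)
  obtain Nb where Nb: "openin T1 Nb" "\<phi>0 \<in> Nb" "\<forall>\<phi>\<in>Nb. \<forall>y\<in>Lmult K m. cmod (\<phi> y - \<phi>0 y) < 1"
    using UCC[OF Lmult_compact[OF assms(1), where m=m] assms(2), where \<delta>=1] by auto
  have cc: "cnj (\<phi>0 x) * \<phi>0 x = 1" for x
    using complex_norm_square[of "\<phi>0 x"] ChD(2)[OF assms(2), of x] by (simp add: mult.commute)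
  show ?thesis
  proof (intro exI conjI allI impI ballI)
    fix \<omega> \<phi> assume om: "Om K \<omega>" and \<phi>: "\<phi> \<in> Nb"
    have \<phi>C: "\<phi> \<in> Ch" using T1_sub[OF Nb(1)] \<phi> by blast
    define \<psi> where "\<psi> = (\<lambda>x. \<phi> x * cnj (\<phi>0 x))"
    have \<psi>C: "\<psi> \<in> Ch" unfolding \<psi>_def by (rule Ch_mult[OF \<phi>C Ch_cnj[OF assms(2)]])
    have eq: "(\<lambda>x. \<psi> x * \<phi>0 x) = \<phi>" unfolding \<psi>_def by (simp add: mult.assoc cc)
    have "\<psi> ` Lmult K m \<subseteq> Lambda1"
    proof
      fix z assume "z \<in> \<psi> ` Lmult K m"
      then obtain y where y: "y \<in> Lmult K m" "z = \<psi> y" by auto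
      have "\<psi> y - 1 = (\<phi> y - \<phi>0 y) * cnj (\<phi>0 y)" unfolding \<psi>_def
        using cc[of y] by (simp add: algebra_simps)
      then have "cmod (\<psi> y - 1) = cmod (\<phi> y - \<phi>0 y)" using ChD(2)[OF assms(2), of y] by (simp add: norm_mult)
      then have "cmod (\<psi> y - 1) < 1" using Nb(3) \<phi> y by auto
      moreover have "Re (\<psi> y) = 1 + Re (\<psi> y - 1)" by simp
      moreover have "\<bar>Re (\<psi> y - 1)\<bar> \<le> cmod (\<psi> y - 1)" by (rule abs_Re_le_cmod)
      ultimately have "0 \<le> Re (\<psi> y)" by linarith
      then show "z \<in> Lambda1" using y ChD(2)[OF \<psi>C] by (simp add: Lambda1_eq)
    qed
    then have sm: "cmod (\<omega> \<psi> - 1) \<le> pi/(2*m)" using Om_small[OF om \<psi>C _ m1] by blast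
    have hom: "\<omega> (\<lambda>x. \<psi> x * \<phi>0 x) = \<omega> \<psi> * \<omega> \<phi>0"
      using om \<psi>C assms(2) unfolding Om_def by blast
    have n: "cmod (\<omega> \<phi>0) = 1" using om assms(2) unfolding Om_def by blast
    have "\<omega> \<phi> - \<omega> \<phi>0 = (\<omega> \<psi> - 1) * \<omega> \<phi>0" using hom eq by (simp add: algebra_simps)
    then have "cmod (\<omega> \<phi> - \<omega> \<phi>0) = cmod (\<omega> \<psi> - 1)" using n by (simp add: norm_mult)
    then show "cmod (\<omega> \<phi> - \<omega> \<phi>0) < \<eta>" using sm pm by linarith
  qed (use Nb in auto)
qed

lemma cmap_mult: "continuous_map X euclidean f \<Longrightarrow> continuous_map X euclidean g \<Longrightarrow> continuous_map X euclidean (\<lambda>x. f x * (g x :: complex))"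
proof -
  assume a: "continuous_map X euclidean f" "continuous_map X euclidean g"
  have "continuous_map X (prod_topology euclidean euclidean) (\<lambda>x. (f x, g x))"
    using a by (simp only: continuous_map_paired)
  then have 1: "continuous_map X euclidean (\<lambda>x. (f x, g x))" by simp
  have "continuous_on UNIV (\<lambda>p::complex\<times>complex. fst p * snd p)" by (intro continuous_intros)
  then have 2: "continuous_map euclidean euclidean (\<lambda>p::complex\<times>complex. fst p * snd p)"
    using continuous_map_iff_continuous[of UNIV] by simp
  show ?thesis using continuous_map_compose[OF 1 2] by (simp add: o_def)
qed

lemma cont_eps:
  assumes "\<And>x \<eta>. x \<in> topspace T \<Longrightarrow> \<eta> > 0 \<Longrightarrow> \<exists>N. openin T N \<and> x \<in> N \<and> (\<forall>y\<in>N. dist (f y) (f x) < \<eta>)"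
  shows "continuous_map T euclidean f"
  unfolding continuous_map_def
proof (intro conjI allI impI)
  show "f \<in> topspace T \<rightarrow> topspace euclidean" by simp
  fix U :: "'b set" assume U: "openin euclidean U"
  show "openin T {x \<in> topspace T. f x \<in> U}"
  proof (subst openin_subopen, intro ballI)
    fix x assume x: "x \<in> {x \<in> topspace T. f x \<in> U}"
    then obtain e where e: "e > 0" "ball (f x) e \<subseteq> U" using U by (auto simp: open_contains_ball)
    obtain N where N: "openin T N" "x \<in> N" "\<forall>y\<in>N. dist (f y) (f x) < e" using assms[of x e] x e by auto
    have "N \<subseteq> {x \<in> topspace T. f x \<in> U}"
      using N e openin_subset[OF N(1)] by (auto simp: dist_commute)
    then show "\<exists>T'. openin T T' \<and> x \<in> T' \<and> T' \<subseteq> {x \<in> topspace T. f x \<in> U}" using N by blast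
  qed
qed

abbreviation T2 :: "(('a::topological_ab_group_add \<Rightarrow> complex) \<Rightarrow> complex) topology" where
  "T2 \<equiv> char_top T1 (char_mult euclidean)"
abbreviation Ch2 :: "(('a::topological_ab_group_add \<Rightarrow> complex) \<Rightarrow> complex) set" where
  "Ch2 \<equiv> chars T1 (char_mult euclidean)"

lemma Ch2_iff: "\<omega> \<in> (Ch2 :: (('a::topological_ab_group_add \<Rightarrow> complex) \<Rightarrow> complex) set) \<longleftrightarrow>
   \<omega> \<in> extensional Ch \<and> continuous_map T1 circle_top \<omega> \<and>
   (\<forall>\<phi>\<in>Ch. \<forall>\<psi>\<in>Ch. \<omega> (\<lambda>x. \<phi> x * \<psi> x) = \<omega> \<phi> * \<omega> \<psi>)"
  unfolding chars_def[of "T1::('a \<Rightarrow> complex) topology" "char_mult euclidean"] by simp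

lemma Ch2_Om: "\<omega> \<in> polar_right T1 (char_mult euclidean) (polar_right euclidean (+) K) \<Longrightarrow> Om K \<omega>"
proof -
  assume w: "\<omega> \<in> polar_right T1 (char_mult euclidean) (polar_right euclidean (+) K)"
  then have c: "\<omega> \<in> Ch2" and l: "\<omega> ` polar_right euclidean (+) K \<subseteq> Lambda1"
    unfolding polar_right_def[of "T1::('a \<Rightarrow> complex) topology"] by auto
  have "\<forall>\<phi>\<in>Ch. cmod (\<omega> \<phi>) = 1" using chars_norm[OF c] by simp
  then show ?thesis using c l unfolding Om_def Ch2_iff by blast
qed

definition PT :: "(('a::topological_ab_group_add \<Rightarrow> complex) \<Rightarrow> complex) topology" where
  "PT = product_topology (\<lambda>_. circle_top) Ch"

lemma topspace_PT: "topspace PT = (\<Pi>\<^sub>E i\<in>Ch. sphere 0 1)"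
  by (simp add: PT_def topspace_product_topology)

lemma PT_proj: "\<phi> \<in> Ch \<Longrightarrow> continuous_map PT euclidean (\<lambda>\<omega>. \<omega> \<phi>)"
  using continuous_map_product_projection[of \<phi> Ch "\<lambda>_. circle_top"] unfolding PT_def cont_circle_iff by blast

lemma PT_compact: "compact_space PT"
proof -
  have "compact_space circle_top" unfolding circle_top_def
    by (rule compact_space_subtopology) (simp add: compactin_euclidean_iff)
  then show ?thesis unfolding PT_def compact_space_product_topology by blast
qed

lemma Lambda1_closed: "closed Lambda1"
proof -
  have "Lambda1 = sphere 0 1 \<inter> {z. 0 \<le> Re z}" by (auto simp: Lambda1_eq)
  moreover have "closed (sphere (0::complex) 1 \<inter> {z. 0 \<le> Re z})"
    by (intro closed_Int closed_sphere closed_halfspace_Re_ge)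
  ultimately show ?thesis by simp
qed

definition HH :: "'a::topological_ab_group_add set \<Rightarrow> (('a \<Rightarrow> complex) \<Rightarrow> complex) set" where
  "HH K = {\<omega> \<in> topspace PT. (\<forall>\<phi>\<in>Ch. \<forall>\<psi>\<in>Ch. \<omega> (\<lambda>x. \<phi> x * \<psi> x) = \<omega> \<phi> * \<omega> \<psi>) \<and>
       (\<forall>\<phi>\<in>polar_right euclidean (+) K. \<omega> \<phi> \<in> Lambda1)}"

lemma HH_closed: fixes K :: "'a::topological_ab_group_add set" shows "closedin PT (HH K)"
proof -
  define A where "A p = {\<omega> \<in> topspace PT. \<omega> (\<lambda>x. fst p x * snd p x) = \<omega> (fst p) * \<omega> (snd p)}"
    for p :: "('a \<Rightarrow> complex) \<times> ('a \<Rightarrow> complex)"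
  define B where "B \<phi> = {\<omega> \<in> topspace PT. \<omega> \<phi> \<in> Lambda1}" for \<phi> :: "'a \<Rightarrow> complex"
  have "HH K = (topspace PT \<inter> (\<Inter>p\<in>Ch \<times> Ch. A p)) \<inter> (topspace PT \<inter> (\<Inter>\<phi>\<in>polar_right euclidean (+) K. B \<phi>))"
    unfolding HH_def A_def B_def by auto
  moreover have "closedin PT (topspace PT \<inter> (\<Inter>p\<in>Ch \<times> Ch. A p))"
  proof (rule closedin_INT_all)
    fix p :: "('a \<Rightarrow> complex) \<times> ('a \<Rightarrow> complex)" assume p: "p \<in> Ch \<times> Ch"
    have c1: "continuous_map PT euclidean (\<lambda>\<omega>. \<omega> (\<lambda>x. fst p x * snd p x))"
      using p by (intro PT_proj Ch_mult) auto
    have c2: "continuous_map PT euclidean (\<lambda>\<omega>. \<omega> (fst p) * \<omega> (snd p))"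
      using p by (intro cmap_mult PT_proj) auto
    show "closedin PT (A p)" unfolding A_def
      by (rule closedin_continuous_maps_eq[OF _ c1 c2]) simp
  qed
  moreover have "closedin PT (topspace PT \<inter> (\<Inter>\<phi>\<in>polar_right euclidean (+) K. B \<phi>))"
  proof (rule closedin_INT_all)
    fix \<phi> assume "\<phi> \<in> polar_right euclidean (+) K"
    then have "\<phi> \<in> Ch" by (simp add: polar_right_def)
    then show "closedin PT (B \<phi>)" unfolding B_def
      by (rule closedin_continuous_map_preimage[OF PT_proj]) (simp add: Lambda1_closed)
  qed
  ultimately show ?thesis by (simp add: closedin_Int)
qed

lemma F_eq_HH:
  assumes "compact K"
  shows "polar_right T1 (char_mult euclidean) (polar_right euclidean (+) K) = HH K"
proof (intro set_eqI iffI)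
  fix \<omega> assume w: "\<omega> \<in> polar_right T1 (char_mult euclidean) (polar_right euclidean (+) K)"
  have om: "Om K \<omega>" using Ch2_Om[OF w] .
  have "\<omega> \<in> extensional Ch" using w unfolding polar_right_def Ch2_iff by blast
  then have "\<omega> \<in> topspace PT" using om unfolding topspace_PT Om_def by (auto simp: PiE_iff)
  then show "\<omega> \<in> HH K" using om unfolding HH_def Om_def by blast
next
  fix \<omega> assume w: "\<omega> \<in> HH K"
  have tp: "\<omega> \<in> topspace PT" using w unfolding HH_def by blast
  have om: "Om K \<omega>" using w tp unfolding HH_def Om_def topspace_PT by (auto simp: PiE_iff)
  have ext: "\<omega> \<in> extensional Ch" using tp unfolding topspace_PT by (auto simp: PiE_iff)
  have "continuous_map T1 euclidean \<omega>"
  proof (rule cont_eps)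
    fix x :: "'a \<Rightarrow> complex" and \<eta> :: real assume "x \<in> topspace T1" "\<eta> > 0"
    then obtain N where "openin T1 N" "x \<in> N" "\<forall>\<omega>. Om K \<omega> \<longrightarrow> (\<forall>\<phi>\<in>N. cmod (\<omega> \<phi> - \<omega> x) < \<eta>)"
      using EQ[OF assms, of x \<eta>] by auto
    then show "\<exists>N. openin T1 N \<and> x \<in> N \<and> (\<forall>y\<in>N. dist (\<omega> y) (\<omega> x) < \<eta>)"
      using om by (auto simp: dist_norm)
  qed
  then have "continuous_map T1 circle_top \<omega>" using om unfolding cont_circle_iff Om_def by simp
  then show "\<omega> \<in> polar_right T1 (char_mult euclidean) (polar_right euclidean (+) K)"
    using ext om unfolding polar_right_def Ch2_iff Om_def by auto
qed

lemma co_UNIV_mem: "UNIV \<in> {{f. f ` K \<subseteq> U} | K U. compactin X K \<and> openin Y U}"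
proof -
  have "{f. f ` {} \<subseteq> {}} \<in> {{f. f ` K \<subseteq> U} | K U. compactin X K \<and> openin Y U}" by force
  then show ?thesis by simp
qed

lemma F_compact:
  fixes K :: "'a::topological_ab_group_add set"
  assumes "compact K"
  shows "compactin T2 (polar_right T1 (char_mult euclidean) (polar_right euclidean (+) K))"
proof -
  define F where "F = polar_right T1 (char_mult euclidean) (polar_right euclidean (+) K)"
  have FH: "F = HH K" unfolding F_def by (rule F_eq_HH[OF assms])
  have FP: "F \<subseteq> topspace PT" using FH unfolding HH_def by auto
  have cP: "compactin PT F" using closedin_compact_space[OF PT_compact HH_closed] FH by simp
  have FCh2: "F \<subseteq> Ch2" unfolding F_def polar_right_def by auto
  have FOm: "\<And>\<omega>. \<omega> \<in> F \<Longrightarrow> Om K \<omega>" unfolding F_def by (rule Ch2_Om)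
  have tsub: "topspace (subtopology PT F) = F" using FP by auto
  have "continuous_map (subtopology PT F) (compact_open_top T1 circle_top) id"
    unfolding compact_open_top_def
  proof (rule continuous_on_generated_topo)
    show "id ` topspace (subtopology PT F) \<subseteq> \<Union> {{f. f ` K \<subseteq> U} | K U. compactin T1 K \<and> openin circle_top U}"
      using co_UNIV_mem by blast
    fix U :: "(('a \<Rightarrow> complex) \<Rightarrow> complex) set" assume "U \<in> {{f. f ` K \<subseteq> U} | K U. compactin T1 K \<and> openin circle_top U}"
    then obtain D W where U: "U = {f. f ` D \<subseteq> W}" "compactin T1 D" "openin circle_top W" by blast
    have DCh: "D \<subseteq> Ch" using compactin_subset_topspace[OF U(2)] by simp
    obtain W' where W': "open W'" "W = sphere 0 1 \<inter> W'" using U(3) unfolding circle_top_def openin_open by blast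
    have E: "id -` U \<inter> topspace (subtopology PT F) = {\<omega> \<in> F. \<omega> ` D \<subseteq> W}" using tsub U(1) by auto
    show "openin (subtopology PT F) (id -` U \<inter> topspace (subtopology PT F))"
      unfolding E
    proof (subst openin_subopen, intro ballI)
      fix \<omega>0 assume w0: "\<omega>0 \<in> {\<omega> \<in> F. \<omega> ` D \<subseteq> W}"
      have om0: "Om K \<omega>0" using FOm w0 by blast
      have "\<omega>0 \<in> Ch2" using w0 FCh2 by blast
      then have "continuous_map T1 circle_top \<omega>0" unfolding Ch2_iff by blast
      then have c0: "continuous_map T1 euclidean \<omega>0" unfolding cont_circle_iff by blast
      have "compact (\<omega>0 ` D)" using image_compactin[OF U(2) c0] by (simp add: compactin_euclidean_iff)
      moreover have "closed (- W')" using W'(1) by (simp add: closed_Compl)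
      moreover have "\<omega>0 ` D \<inter> - W' = {}" using w0 W'(2) by auto
      ultimately obtain \<epsilon> where ep: "\<epsilon> > 0" "\<forall>x\<in>\<omega>0 ` D. \<forall>y\<in>- W'. \<epsilon> \<le> dist x y"
        using separate_compact_closed by blast
      have "\<forall>\<kappa>\<in>D. \<exists>N. openin T1 N \<and> \<kappa> \<in> N \<and> (\<forall>\<omega>. Om K \<omega> \<longrightarrow> (\<forall>\<phi>\<in>N. cmod (\<omega> \<phi> - \<omega> \<kappa>) < \<epsilon>/3))"
      proof
        fix \<kappa> assume "\<kappa> \<in> D"
        then have "\<kappa> \<in> Ch" using DCh by blast
        moreover have "\<epsilon>/3 > 0" using ep(1) by simp
        ultimately show "\<exists>N. openin T1 N \<and> \<kappa> \<in> N \<and> (\<forall>\<omega>. Om K \<omega> \<longrightarrow> (\<forall>\<phi>\<in>N. cmod (\<omega> \<phi> - \<omega> \<kappa>) < \<epsilon>/3))"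
          by (rule EQ[OF assms])
      qed
      from bchoice[OF this] obtain Nf where Nf: "\<forall>\<kappa>\<in>D. openin T1 (Nf \<kappa>) \<and> \<kappa> \<in> Nf \<kappa> \<and> (\<forall>\<omega>. Om K \<omega> \<longrightarrow> (\<forall>\<phi>\<in>Nf \<kappa>. cmod (\<omega> \<phi> - \<omega> \<kappa>) < \<epsilon>/3))"
        by blast
      have cov: "(\<forall>B\<in>Nf ` D. openin T1 B) \<and> D \<subseteq> \<Union>(Nf ` D)" using Nf by blast
      have "\<forall>\<U>. (\<forall>B\<in>\<U>. openin T1 B) \<and> D \<subseteq> \<Union>\<U> \<longrightarrow> (\<exists>\<F>. finite \<F> \<and> \<F> \<subseteq> \<U> \<and> D \<subseteq> \<Union>\<F>)"
        using U(2) unfolding compactin_def by (rule conjunct2)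
      then have "\<exists>\<F>. finite \<F> \<and> \<F> \<subseteq> Nf ` D \<and> D \<subseteq> \<Union>\<F>" using cov by blast
      then obtain \<F> where \<F>: "finite \<F>" "\<F> \<subseteq> Nf ` D" "D \<subseteq> \<Union>\<F>" by blast
      then obtain D' where D': "D' \<subseteq> D" "finite D'" "\<F> = Nf ` D'" using finite_subset_image by metis
      define Tset where "Tset = topspace PT \<inter> (\<Inter>\<kappa>\<in>D'. {\<omega> \<in> topspace PT. \<omega> \<kappa> \<in> ball (\<omega>0 \<kappa>) (\<epsilon>/3)})"
      have "openin PT Tset" unfolding Tset_def
      proof (rule openin_INT_fin[OF D'(2)])
        fix \<kappa> assume "\<kappa> \<in> D'"
        then have "\<kappa> \<in> Ch" using D'(1) DCh by blast
        then show "openin PT {\<omega> \<in> topspace PT. \<omega> \<kappa> \<in> ball (\<omega>0 \<kappa>) (\<epsilon>/3)}"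
          by (intro openin_continuous_map_preimage[OF PT_proj]) auto
      qed
      then have o: "openin (subtopology PT F) (Tset \<inter> F)" by (rule openin_subtopology_Int)
      have in0: "\<omega>0 \<in> Tset \<inter> F" using w0 FP ep(1) unfolding Tset_def by auto
      have sub: "Tset \<inter> F \<subseteq> {\<omega> \<in> F. \<omega> ` D \<subseteq> W}"
      proof (rule subsetI, rule CollectI, rule conjI)
        fix \<omega> assume w: "\<omega> \<in> Tset \<inter> F"
        then show "\<omega> \<in> F" by blast
        have om: "Om K \<omega>" using FOm w by blast
        show "\<omega> ` D \<subseteq> W"
        proof
          fix z assume "z \<in> \<omega> ` D"
          then obtain \<kappa> where \<kappa>: "\<kappa> \<in> D" "z = \<omega> \<kappa>" by auto
          obtain \<kappa>i where \<kappa>i: "\<kappa>i \<in> D'" "\<kappa> \<in> Nf \<kappa>i" using \<F>(3) D'(3) \<kappa>(1) by auto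
          have \<kappa>iD: "\<kappa>i \<in> D" using \<kappa>i D'(1) by blast
          have d1: "cmod (\<omega> \<kappa> - \<omega> \<kappa>i) < \<epsilon>/3" using Nf \<kappa>iD \<kappa>i(2) om by blast
          have d3: "cmod (\<omega>0 \<kappa> - \<omega>0 \<kappa>i) < \<epsilon>/3" using Nf \<kappa>iD \<kappa>i(2) om0 by blast
          have d2: "dist (\<omega>0 \<kappa>i) (\<omega> \<kappa>i) < \<epsilon>/3" using w \<kappa>i(1) unfolding Tset_def by auto
          have t1: "dist (\<omega>0 \<kappa>) (\<omega> \<kappa>) \<le> dist (\<omega>0 \<kappa>) (\<omega>0 \<kappa>i) + dist (\<omega>0 \<kappa>i) (\<omega> \<kappa>)"
            by (rule dist_triangle)
          have t2: "dist (\<omega>0 \<kappa>i) (\<omega> \<kappa>) \<le> dist (\<omega>0 \<kappa>i) (\<omega> \<kappa>i) + dist (\<omega> \<kappa>i) (\<omega> \<kappa>)"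
            by (rule dist_triangle)
          have "dist (\<omega>0 \<kappa>) (\<omega> \<kappa>) \<le> dist (\<omega>0 \<kappa>) (\<omega>0 \<kappa>i) + dist (\<omega>0 \<kappa>i) (\<omega> \<kappa>i) + dist (\<omega> \<kappa>i) (\<omega> \<kappa>)"
            using t1 t2 by linarith
          also have "\<dots> < \<epsilon>" using d1 d2 d3 by (simp add: dist_norm norm_minus_commute)
          finally have dd: "dist (\<omega>0 \<kappa>) (\<omega> \<kappa>) < \<epsilon>" .
          have "\<omega> \<kappa> \<in> W'"
          proof (rule ccontr)
            assume "\<omega> \<kappa> \<notin> W'"
            then have "\<epsilon> \<le> dist (\<omega>0 \<kappa>) (\<omega> \<kappa>)" using ep(2) \<kappa>(1) by blast
            then show False using dd by simp
          qed
          have "\<omega> \<in> (\<Pi>\<^sub>E i\<in>Ch. sphere 0 1)" using w FP unfolding topspace_PT by blast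
          then have "\<omega> \<kappa> \<in> sphere 0 1" using \<kappa>(1) DCh by (auto simp: PiE_iff)
          then show "z \<in> W" using W'(2) \<kappa>(2) \<open>\<omega> \<kappa> \<in> W'\<close> by blast
        qed
      qed
      show "\<exists>T. openin (subtopology PT F) T \<and> \<omega>0 \<in> T \<and> T \<subseteq> {\<omega> \<in> F. \<omega> ` D \<subseteq> W}"
        using o in0 sub by blast
    qed
  qed
  then have cont: "continuous_map (subtopology PT F) T2 id"
    unfolding char_top_def[of "T1::('a \<Rightarrow> complex) topology"] continuous_map_in_subtopology
    using tsub FCh2 by auto
  have "compactin T2 (id ` F)" by (rule image_compactin[OF _ cont]) (simp add: compactin_subtopology cP)
  then show ?thesis unfolding F_def by simp
qed

lemma gen_basis: "generate_topology_on S N \<Longrightarrow> x \<in> N \<Longrightarrow> \<exists>\<F>. finite \<F> \<and> \<F> \<subseteq> S \<and> x \<in> \<Inter>\<F> \<and> \<Inter>\<F> \<subseteq> N"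
proof (induct arbitrary: x rule: generate_topology_on.induct)
  case Empty then show ?case by simp
next
  case (Int a b)
  have xa: "x \<in> a" and xb: "x \<in> b" using Int.prems by auto
  from Int.hyps(2)[OF xa] obtain Fa where Fa: "finite Fa" "Fa \<subseteq> S" "x \<in> \<Inter>Fa" "\<Inter>Fa \<subseteq> a" by blast
  from Int.hyps(4)[OF xb] obtain Fb where Fb: "finite Fb" "Fb \<subseteq> S" "x \<in> \<Inter>Fb" "\<Inter>Fb \<subseteq> b" by blast
  have "finite (Fa \<union> Fb) \<and> Fa \<union> Fb \<subseteq> S \<and> x \<in> \<Inter>(Fa \<union> Fb) \<and> \<Inter>(Fa \<union> Fb) \<subseteq> a \<inter> b"
    using Fa Fb by auto
  then show ?case by (rule exI)
next
  case (UN K)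
  from UN.prems obtain k where k: "k \<in> K" "x \<in> k" by blast
  from UN.hyps(2)[OF k] obtain F where F: "finite F" "F \<subseteq> S" "x \<in> \<Inter>F" "\<Inter>F \<subseteq> k" by blast
  have "finite F \<and> F \<subseteq> S \<and> x \<in> \<Inter>F \<and> \<Inter>F \<subseteq> \<Union>K" using F k by blast
  then show ?case by (rule exI)
next
  case (Basis s)
  have "finite {s} \<and> {s} \<subseteq> S \<and> x \<in> \<Inter>{s} \<and> \<Inter>{s} \<subseteq> s" using Basis by simp
  then show ?case by (rule exI)
qed

lemma Haus_co:
  assumes "S \<subseteq> extensional (topspace T)" "\<And>f x. f \<in> S \<Longrightarrow> x \<in> topspace T \<Longrightarrow> cmod (f x) = 1"
  shows "Hausdorff_space (subtopology (compact_open_top T circle_top) S)"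
  unfolding Hausdorff_space_def
proof (intro allI impI)
  fix f g assume fg: "f \<in> topspace (subtopology (compact_open_top T circle_top) S) \<and>
      g \<in> topspace (subtopology (compact_open_top T circle_top) S) \<and> f \<noteq> g"
  then have fS: "f \<in> S" and gS: "g \<in> S" and ne: "f \<noteq> g" by auto
  obtain x where x: "x \<in> topspace T" "f x \<noteq> g x"
  proof (rule ccontr)
    assume "\<not> thesis"
    then have "\<And>x. x \<in> topspace T \<Longrightarrow> f x = g x" using that by blast
    then have "f = g" using assms(1) fS gS by (intro extensionalityI[of f "topspace T" g]) auto
    then show False using ne by simp
  qed
  define d where "d = dist (f x) (g x)"
  have d: "d > 0" using x(2) d_def by simp
  define U1 where "U1 = sphere 0 1 \<inter> ball (f x) (d/2)"
  define U2 where "U2 = sphere 0 1 \<inter> ball (g x) (d/2)"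
  have o1: "openin circle_top U1" unfolding circle_top_def U1_def by (intro openin_open_Int) simp
  have o2: "openin circle_top U2" unfolding circle_top_def U2_def by (intro openin_open_Int) simp
  have cx: "compactin T {x}" using x(1) by simp
  define A where "A = {h. h ` {x} \<subseteq> U1} \<inter> S"
  define B where "B = {h. h ` {x} \<subseteq> U2} \<inter> S"
  have "openin (subtopology (compact_open_top T circle_top) S) A"
    unfolding A_def by (rule openin_subtopology_Int[OF co_open[OF cx o1]])
  moreover have "openin (subtopology (compact_open_top T circle_top) S) B"
    unfolding B_def by (rule openin_subtopology_Int[OF co_open[OF cx o2]])
  moreover have "f \<in> A" using fS assms(2)[OF fS x(1)] d unfolding A_def U1_def by auto
  moreover have "g \<in> B" using gS assms(2)[OF gS x(1)] d unfolding B_def U2_def by auto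
  moreover have "disjnt A B" unfolding disjnt_def
  proof (rule equals0I)
    fix h assume "h \<in> A \<inter> B"
    then have "h \<in> A" "h \<in> B" by auto
    then have "dist (f x) (h x) < d/2" "dist (g x) (h x) < d/2" unfolding A_def B_def U1_def U2_def by auto
    moreover have "d \<le> dist (f x) (h x) + dist (h x) (g x)" unfolding d_def by (rule dist_triangle)
    ultimately show False by (simp add: dist_commute)
  qed
  ultimately show "\<exists>U V. openin (subtopology (compact_open_top T circle_top) S) U \<and>
      openin (subtopology (compact_open_top T circle_top) S) V \<and> f \<in> U \<and> g \<in> V \<and> disjnt U V"
    by blast
qed

lemma Ch2_one: "\<omega> \<in> Ch2 \<Longrightarrow> \<omega> (\<lambda>x. 1) = 1"
proof -
  assume w: "\<omega> \<in> Ch2"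
  have "\<omega> (\<lambda>x. 1) = \<omega> (\<lambda>x. 1) * \<omega> (\<lambda>x. 1)"
    using w Ch_one unfolding Ch2_iff by fastforce
  moreover have "cmod (\<omega> (\<lambda>x. 1)) = 1" using chars_norm[OF w] Ch_one by simp
  then have "\<omega> (\<lambda>x. 1) \<noteq> 0" by auto
  ultimately show ?thesis by simp
qed

lemma single_polar:
  fixes K1 :: "'a::topological_ab_group_add set"
  assumes "compact K1" "openin circle_top U1" "(\<lambda>x::'a. 1::complex) ` K1 \<subseteq> U1"
  shows "\<exists>K. compact K \<and> polar_right euclidean (+) K \<subseteq> {f. f ` K1 \<subseteq> U1}"
proof (cases "K1 = {}")
  case True then show ?thesis by (intro exI[of _ "{}"]) auto
next
  case False
  then have one: "1 \<in> U1" using assms(3) by auto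
  obtain W where W: "open W" "U1 = sphere 0 1 \<inter> W" using assms(2) unfolding circle_top_def openin_open by blast
  obtain \<epsilon> where ep: "\<epsilon> > 0" "ball 1 \<epsilon> \<subseteq> W" using W one open_contains_ball by blast
  obtain m :: nat where m: "pi/\<epsilon> < m" using reals_Archimedean2 by blast
  have "pi/\<epsilon> > 0" using ep(1) by simp
  then have m1: "m \<ge> 1" using m by (cases m) auto
  have "pi < m * \<epsilon>" using m ep(1) by (simp add: field_simps)
  moreover have "m * \<epsilon> \<le> 2 * m * \<epsilon>" using ep(1) by simp
  ultimately have "pi < 2 * m * \<epsilon>" by linarith
  then have pm: "pi/(2*m) < \<epsilon>" using m1 ep(1) by (simp add: field_simps)
  show ?thesis
  proof (intro exI conjI)
    show "compact (Lmult K1 m)" by (rule Lmult_compact[OF assms(1)])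
    show "polar_right euclidean (+) (Lmult K1 m) \<subseteq> {f. f ` K1 \<subseteq> U1}"
    proof (rule subsetI, rule CollectI, rule image_subsetI)
      fix \<phi> x assume \<phi>: "\<phi> \<in> polar_right euclidean (+) (Lmult K1 m)" and x: "x \<in> K1"
      have \<phi>C: "\<phi> \<in> Ch" and \<phi>L: "\<phi> ` Lmult K1 m \<subseteq> Lambda1" using \<phi> unfolding polar_right_eu by auto
      have "\<forall>k\<in>{1..m}. 0 \<le> Re (\<phi> x ^ k)"
      proof
        fix k assume k: "k \<in> {1..m}"
        have "nmul k x \<in> Lmult K1 m" using k x unfolding Lmult_def by auto
        then have "\<phi> (nmul k x) \<in> Lambda1" using \<phi>L by blast
        then show "0 \<le> Re (\<phi> x ^ k)" using Ch_nmul[OF \<phi>C] by (simp add: Lambda1_eq)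
      qed
      then have "cmod (\<phi> x - 1) \<le> pi/(2*m)" using circle_arc[OF ChD(2)[OF \<phi>C] m1] by blast
      then have "dist 1 (\<phi> x) < \<epsilon>" using pm by (simp add: dist_norm norm_minus_commute)
      then have "\<phi> x \<in> W" using ep(2) by auto
      then show "\<phi> x \<in> U1" using W(2) ChD(2)[OF \<phi>C] by auto
    qed
  qed
qed

lemma polar_right_anti: "K \<subseteq> K' \<Longrightarrow> polar_right X m K' \<subseteq> polar_right X m K"
  unfolding polar_right_def by auto

lemma fam_polar:
  fixes \<F> :: "(('a::topological_ab_group_add) \<Rightarrow> complex) set set"
  shows "finite \<F> \<Longrightarrow> \<F> \<subseteq> {{f. f ` K \<subseteq> U} | K U. compactin euclidean K \<and> openin circle_top U} \<Longrightarrow>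
    (\<lambda>x. 1) \<in> \<Inter>\<F> \<Longrightarrow> \<exists>K. compact K \<and> polar_right euclidean (+) K \<subseteq> \<Inter>\<F>"
proof (induct rule: finite_induct)
  case empty then show ?case by (intro exI[of _ "{}"]) auto
next
  case (insert U \<F>)
  have h1: "\<F> \<subseteq> {{f. f ` K \<subseteq> U} | K U. compactin euclidean K \<and> openin circle_top U}" using insert(4) by simp
  have h2: "(\<lambda>x. 1) \<in> \<Inter>\<F>" using insert(5) by simp
  obtain K1 where K1: "compact K1" "polar_right euclidean (+) K1 \<subseteq> \<Inter>\<F>" using insert(3)[OF h1 h2] by blast
  have "U \<in> {{f. f ` K \<subseteq> U} | K U. compactin euclidean K \<and> openin circle_top U}" using insert(4) by simp
  then obtain K2 U2 where U: "U = {f. f ` K2 \<subseteq> U2}" "compactin euclidean K2" "openin circle_top U2"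
    by blast
  have c2: "compact K2" using U(2) by (simp add: compactin_euclidean_iff)
  have "(\<lambda>x. 1) \<in> U" using insert(5) by simp
  then have "(\<lambda>x::'a. 1::complex) ` K2 \<subseteq> U2" using U(1) by simp
  from single_polar[OF c2 U(3) this] obtain K3 where K3: "compact K3" "polar_right euclidean (+) K3 \<subseteq> U"
    using U(1) by blast
  have a1: "polar_right euclidean (+) (K1 \<union> K3) \<subseteq> polar_right euclidean (+) K1"
    by (rule polar_right_anti) simp
  have a3: "polar_right euclidean (+) (K1 \<union> K3) \<subseteq> polar_right euclidean (+) K3"
    by (rule polar_right_anti) simp
  show ?case
  proof (intro exI conjI)
    show "compact (K1 \<union> K3)" using K1(1) K3(1) by (rule compact_Un)
    show "polar_right euclidean (+) (K1 \<union> K3) \<subseteq> \<Inter>(insert U \<F>)" using a1 a3 K1(2) K3(2) by auto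
  qed
qed

lemma nbhd_polar:
  assumes "openin (T1 :: ('a::topological_ab_group_add \<Rightarrow> complex) topology) N" "(\<lambda>x. 1) \<in> N"
  shows "\<exists>K::'a set. compact K \<and> polar_right euclidean (+) K \<subseteq> N"
proof -
  obtain G0 where G0: "openin (compact_open_top euclidean circle_top) G0" "N = G0 \<inter> Ch"
    using assms(1) unfolding char_top_def[of "euclidean::'a topology"] openin_subtopology by blast
  have g1: "(\<lambda>x. 1) \<in> G0" using assms(2) G0(2) by simp
  have gt: "generate_topology_on {{f. f ` K \<subseteq> U} | K U. compactin (euclidean::'a topology) K \<and> openin circle_top U} G0"
    using G0(1) unfolding compact_open_top_def openin_topology_generated_by_iff .
  obtain \<F> where F: "finite \<F>" "\<F> \<subseteq> {{f. f ` K \<subseteq> U} | K U. compactin (euclidean::'a topology) K \<and> openin circle_top U}"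
    "(\<lambda>x. 1) \<in> \<Inter>\<F>" "\<Inter>\<F> \<subseteq> G0"
    using gen_basis[OF gt g1] by blast
  obtain K where K: "compact K" "polar_right euclidean (+) K \<subseteq> \<Inter>\<F>" using fam_polar[OF F(1-3)] by blast
  have "polar_right euclidean (+) K \<subseteq> Ch" unfolding polar_right_def by auto
  then have "polar_right euclidean (+) K \<subseteq> G0 \<inter> Ch" using K(2) F(4) by auto
  then show ?thesis using K(1) G0(2) by auto
qed

lemma eval_map_app: "\<gamma> \<in> chars X m \<Longrightarrow> eval_map X m b \<gamma> = \<gamma> b"
  unfolding eval_map_def by simp

theorem mainTheorem9:
  fixes A :: "'a::{topological_ab_group_add, t2_space} itself"
  defines "X \<equiv> (euclidean :: 'a topology)"
  assumes alphaA_cont: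
    "continuous_map X (char_top (char_top X (+)) (char_mult X)) (eval_map X (+))"
  assumes alphaAhat_cont:
    "continuous_map (char_top X (+))
       (char_top (char_top (char_top X (+)) (char_mult X)) (char_mult (char_top X (+))))
       (eval_map (char_top X (+)) (char_mult X))"
  shows "(\<forall>F. compactin (char_top (char_top X (+)) (char_mult X)) F \<longrightarrow>
             compactin X {a \<in> topspace X. eval_map X (+) a \<in> F})
         \<longleftrightarrow> qc_compactness_property X (+)"
proof -
  have aA: "continuous_map (euclidean::'a topology) T2 (eval_map euclidean (+))"
    using alphaA_cont unfolding X_def .
  have aAh: "continuous_map (T1::('a \<Rightarrow> complex) topology) (char_top T2 (char_mult T1)) (eval_map T1 (char_mult euclidean))"
    using alphaAhat_cont unfolding X_def .
  have amem: "eval_map euclidean (+) a \<in> (Ch2::(('a \<Rightarrow> complex) \<Rightarrow> complex) set)" for a :: 'a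
    using continuous_map_image_subset_topspace[OF aA] by auto
  have aapp: "\<gamma> \<in> Ch \<Longrightarrow> eval_map euclidean (+) a \<gamma> = \<gamma> a" for \<gamma> and a :: 'a
    by (rule eval_map_app)
  show ?thesis unfolding X_def
  proof
    assume H: "\<forall>F. compactin (T2::(('a \<Rightarrow> complex) \<Rightarrow> complex) topology) F \<longrightarrow>
      compactin euclidean {a \<in> topspace euclidean. eval_map euclidean (+) a \<in> F}"
    show "qc_compactness_property (euclidean::'a topology) (+)"
      unfolding qc_compactness_property_def
    proof (intro allI impI)
      fix K :: "'a set" assume "compactin euclidean K"
      then have cK: "compact K" by (simp add: compactin_euclidean_iff)
      define F where "F = polar_right T1 (char_mult euclidean) (polar_right euclidean (+) K)"
      have "compactin T2 F" unfolding F_def by (rule F_compact[OF cK])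
      then have c: "compactin euclidean {a \<in> topspace euclidean. eval_map euclidean (+) a \<in> F}" using H by blast
      have "{a \<in> topspace euclidean. eval_map euclidean (+) a \<in> F} = polar_left euclidean (+) (polar_right euclidean (+) K)"
      proof (intro set_eqI iffI)
        fix a assume "a \<in> {a \<in> topspace euclidean. eval_map euclidean (+) a \<in> F}"
        then have im: "eval_map euclidean (+) a ` polar_right euclidean (+) K \<subseteq> Lambda1"
          unfolding F_def polar_right_def[of "T1::('a \<Rightarrow> complex) topology"] by auto
        have "\<forall>\<gamma>\<in>polar_right euclidean (+) K. \<gamma> a \<in> Lambda1"
        proof
          fix \<gamma> assume g: "\<gamma> \<in> polar_right euclidean (+) K"
          have gC: "\<gamma> \<in> Ch" using g unfolding polar_right_eu by blast
          have "eval_map euclidean (+) a \<gamma> \<in> Lambda1" using im g by blast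
          then show "\<gamma> a \<in> Lambda1" by (simp add: aapp[OF gC])
        qed
        then show "a \<in> polar_left euclidean (+) (polar_right euclidean (+) K)"
          unfolding polar_left_def by simp
      next
        fix a assume "a \<in> polar_left euclidean (+) (polar_right euclidean (+) K)"
        then have "\<forall>\<gamma>\<in>polar_right euclidean (+) K. \<gamma> a \<in> Lambda1" by (simp add: polar_left_def)
        then have "eval_map euclidean (+) a ` polar_right euclidean (+) K \<subseteq> Lambda1"
          using aapp by (auto simp: polar_right_eu)
        then show "a \<in> {a \<in> topspace euclidean. eval_map euclidean (+) a \<in> F}"
          unfolding F_def polar_right_def[of "T1::('a \<Rightarrow> complex) topology"] using amem by auto
      qed
      then show "compactin euclidean (polar_left euclidean (+) (polar_right euclidean (+) K))" using c by simp
    qed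
  next
    assume Q: "qc_compactness_property (euclidean::'a topology) (+)"
    show "\<forall>F. compactin (T2::(('a \<Rightarrow> complex) \<Rightarrow> complex) topology) F \<longrightarrow>
      compactin euclidean {a \<in> topspace euclidean. eval_map euclidean (+) a \<in> F}"
    proof (intro allI impI)
      fix F :: "(('a \<Rightarrow> complex) \<Rightarrow> complex) set" assume cF: "compactin T2 F"
      have FCh2: "F \<subseteq> Ch2" using compactin_subset_topspace[OF cF] by simp
      have haus: "Hausdorff_space (T2::(('a \<Rightarrow> complex) \<Rightarrow> complex) topology)"
        unfolding char_top_def[of "T1::('a \<Rightarrow> complex) topology"]
      proof (rule Haus_co)
        show "Ch2 \<subseteq> extensional (topspace (T1::('a \<Rightarrow> complex) topology))"
          unfolding chars_def[of "T1::('a \<Rightarrow> complex) topology"] by auto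
        show "cmod (f x) = 1" if "f \<in> (Ch2::(('a \<Rightarrow> complex) \<Rightarrow> complex) set)" "x \<in> topspace T1" for f x
          using that by (rule chars_norm)
      qed
      have clF: "closedin T2 F" by (rule compactin_imp_closedin[OF haus cF])
      have cl: "closedin euclidean {a \<in> topspace euclidean. eval_map euclidean (+) a \<in> F}"
        by (rule closedin_continuous_map_preimage[OF aA clF])
      define Lo where "Lo = sphere (0::complex) 1 \<inter> {z. 0 < Re z}"
      have oLo: "openin circle_top Lo" unfolding circle_top_def Lo_def
        by (intro openin_open_Int open_halfspace_Re_gt)
      have Og: "openin (compact_open_top T2 circle_top) {h. h ` F \<subseteq> Lo}" by (rule co_open[OF cF oLo])
      have Oo: "openin (char_top T2 (char_mult T1)) ({h. h ` F \<subseteq> Lo} \<inter> chars T2 (char_mult (T1::('a \<Rightarrow> complex) topology)))"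
        unfolding char_top_def[of "T2::(('a \<Rightarrow> complex) \<Rightarrow> complex) topology"] by (rule openin_subtopology_Int[OF Og])
      define N where "N = {\<chi>' \<in> topspace T1. eval_map T1 (char_mult euclidean) \<chi>' \<in> {h. h ` F \<subseteq> Lo} \<inter> chars T2 (char_mult (T1::('a \<Rightarrow> complex) topology))}"
      have oN: "openin T1 N" unfolding N_def by (rule openin_continuous_map_preimage[OF aAh Oo])
      have eapp: "eval_map T1 (char_mult euclidean) \<chi>' \<omega> = \<omega> \<chi>'" if "\<omega> \<in> F" for \<chi>' \<omega>
        using that FCh2 eval_map_app[of \<omega> "T1::('a \<Rightarrow> complex) topology" "char_mult euclidean"] by blast
      have N1: "(\<lambda>x. 1) \<in> N"
      proof -
        have e1: "eval_map T1 (char_mult euclidean) (\<lambda>x::'a. 1::complex) \<in> chars T2 (char_mult (T1::('a \<Rightarrow> complex) topology))"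
          using continuous_map_image_subset_topspace[OF aAh] Ch_one by auto
        have "eval_map T1 (char_mult euclidean) (\<lambda>x::'a. 1::complex) \<omega> \<in> Lo" if "\<omega> \<in> F" for \<omega>
        proof -
          have "\<omega> \<in> Ch2" using that FCh2 by blast
          then have "\<omega> (\<lambda>x. 1) = 1" by (rule Ch2_one)
          then show ?thesis using eapp[OF that] unfolding Lo_def by simp
        qed
        then show ?thesis unfolding N_def using e1 Ch_one by auto
      qed
      obtain K where K: "compact K" "polar_right euclidean (+) K \<subseteq> N" using nbhd_polar[OF oN N1] by blast
      have NF: "\<omega> \<kappa> \<in> Lambda1" if "\<kappa> \<in> N" "\<omega> \<in> F" for \<kappa> \<omega>
      proof -
        have "eval_map T1 (char_mult euclidean) \<kappa> \<omega> \<in> Lo" using that unfolding N_def by auto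
        then show ?thesis using eapp[OF that(2)] unfolding Lo_def Lambda1_eq by auto
      qed
      have sub: "{a \<in> topspace euclidean. eval_map euclidean (+) a \<in> F} \<subseteq> polar_left euclidean (+) (polar_right euclidean (+) K)"
      proof
        fix a assume a: "a \<in> {a \<in> topspace euclidean. eval_map euclidean (+) a \<in> F}"
        have "\<gamma> a \<in> Lambda1" if g: "\<gamma> \<in> polar_right euclidean (+) K" for \<gamma>
        proof -
          have "\<gamma> \<in> Ch" using g unfolding polar_right_eu by blast
          then have "\<gamma> a = eval_map euclidean (+) a \<gamma>" using aapp by simp
          moreover have "\<gamma> \<in> N" using g K(2) by blast
          ultimately show ?thesis using NF a by auto
        qed
        then show "a \<in> polar_left euclidean (+) (polar_right euclidean (+) K)" unfolding polar_left_def by auto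
      qed
      have "compactin euclidean (polar_left euclidean (+) (polar_right euclidean (+) K))"
        using Q K(1) unfolding qc_compactness_property_def compactin_euclidean_iff by blast
      then show "compactin euclidean {a \<in> topspace euclidean. eval_map euclidean (+) a \<in> F}"
        by (rule closed_compactin[OF _ sub cl])
    qed
  qed
qed

end
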